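(* Let $Q$ be a conjunctive query over $\mathcal{D}^p$ and $D^p$ an instance of $\mathcal{D}^p$ consistent w.r.t. a set $\mathcal{IC}$ of denial constraints. For each pair $\langle\vec t,[p^{\min},p^{\max}]\rangle\in Ans(Q,D^p,\mathcal{IC})$ and each $p\in[p^{\min},p^{\max}]$, there is a model $M$ of $D^p$ w.r.t. $\mathcal{IC}$ such that $\langle\vec t,p\rangle\in Ans^M(Q,D^p,\mathcal{IC})$.
   Context: A PDB instance $D^p$ of a schema $\mathcal{D}^p$ is a finite set of tuples, each with a probability $p(t)\in[0,1]$. Possible worlds are subsets of its tuples ($pwd(D^p)$); an interpretation is a probability distribution on $pwd(D^p)$ such that the total probability of worlds containing $t$ is $p(t)$. For a set $\mathcal{IC}$ of denial constraints (formulas $\forall\vec x.\neg[R_1(\vec x_1)\wedge\dots\wedge R_m(\vec x_m)\wedge\phi]$, $\phi$ a conjunction of comparisons), a model is an interpretation assigning probability $0$ to every world violating $\mathcal{IC}$; $\mathcal{M}(D^p,\mathcal{IC})$ is the set of models. A conjunctive query is $Q(\vec x)=\exists\vec z.\,R_1(\vec y_1)\wedge\dots\wedge R_m(\vec y_m)\wedge\phi(\vec y_1,\dots,\vec y_m)$ with $\phi$ a conjunction of comparisons. For a model $M$, $Ans^M(Q,D^p,\mathcal{IC})$ is the set of pairs $\langle\vec t,p^M_Q(\vec t)\rangle$ for ground tuples $\vec t$ such that $w\models Q(\vec t)$ for some $w\in pwd(D^p)$, where $p^M_Q(\vec t)=\sum_{w\in pwd(D^p),\,w\models Q(\vec t)}M(w)$.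 $Ans(Q,D^p,\mathcal{IC})$ is the set of pairs $\langle\vec t,[p^{\min},p^{\max}]\rangle$ for $\vec t$ occurring in $Ans^M$ for some model $M$, with $p^{\min}=\min_{M\in\mathcal{M}(D^p,\mathcal{IC})}p^M_Q(\vec t)$ and $p^{\max}=\max_{M\in\mathcal{M}(D^p,\mathcal{IC})}p^M_Q(\vec t)$. *)

theory Defs
  imports Complex_Main
begin

type_synonym ('r, 'c) fact = "'r \<times> 'c list"

datatype ('v, 'c) trm = Var 'v | Const 'c

datatype cmp_op = CEq | CNeq | CLt | CLe | CGt | CGe

type_synonym ('v, 'c) comparison = "('v, 'c) trm \<times> cmp_op \<times> ('v, 'c) trm"

type_synonym ('r, 'v, 'c) atom = "'r \<times> ('v, 'c) trm list"

fun trm_val :: "('v \<Rightarrow> 'c) \<Rightarrow> ('v, 'c) trm \<Rightarrow> 'c" where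
  "trm_val \<nu> (Var v) = \<nu> v"
| "trm_val \<nu> (Const c) = c"

fun op_holds :: "cmp_op \<Rightarrow> 'c::linorder \<Rightarrow> 'c \<Rightarrow> bool" where
  "op_holds CEq a b = (a = b)"
| "op_holds CNeq a b = (a \<noteq> b)"
| "op_holds CLt a b = (a < b)"
| "op_holds CLe a b = (a \<le> b)"
| "op_holds CGt a b = (a > b)"
| "op_holds CGe a b = (a \<ge> b)"

definition cmp_holds :: "('v \<Rightarrow> 'c::linorder) \<Rightarrow> ('v, 'c) comparison \<Rightarrow> bool" where
  "cmp_holds \<nu> cm = (case cm of (s, r, u) \<Rightarrow> op_holds r (trm_val \<nu> s) (trm_val \<nu> u))"

definition ground_atom :: "('v \<Rightarrow> 'c) \<Rightarrow> ('r, 'v, 'c) atom \<Rightarrow> ('r, 'c) fact" where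
  "ground_atom \<nu> a = (fst a, map (trm_val \<nu>) (snd a))"

text \<open>Denial constraint  forall x. not [R1(x1) and ... and Rm(xm) and phi]:
  list of relational atoms and list of comparisons (phi is their conjunction).\<close>
record ('r, 'v, 'c) denial =
  dc_atoms :: "('r, 'v, 'c) atom list"
  dc_cmps  :: "('v, 'c) comparison list"

definition sat_denial :: "('r, 'c::linorder) fact set \<Rightarrow> ('r, 'v, 'c) denial \<Rightarrow> bool" where
  "sat_denial w ic = (\<not> (\<exists>\<nu>. (\<forall>a \<in> set (dc_atoms ic). ground_atom \<nu> a \<in> w)
                            \<and> (\<forall>cm \<in> set (dc_cmps ic). cmp_holds \<nu> cm)))"

definition sat_ICs :: "('r, 'c::linorder) fact set \<Rightarrow> ('r, 'v, 'c) denial set \<Rightarrow> bool" where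
  "sat_ICs w IC = (\<forall>ic \<in> IC. sat_denial w ic)"

text \<open>Conjunctive query Q(x) = exists z. R1(y1) and ... and Rm(ym) and phi:
  free (answer) variables x, relational atoms, comparisons; all other variables are
  existentially quantified.\<close>
record ('r, 'v, 'c) cq =
  cq_head  :: "'v list"
  cq_atoms :: "('r, 'v, 'c) atom list"
  cq_cmps  :: "('v, 'c) comparison list"

definition cq_holds :: "('r, 'c::linorder) fact set \<Rightarrow> ('r, 'v, 'c) cq \<Rightarrow> 'c list \<Rightarrow> bool" where
  "cq_holds w Q t = (\<exists>\<nu>. map \<nu> (cq_head Q) = t
                        \<and> (\<forall>a \<in> set (cq_atoms Q). ground_atom \<nu> a \<in> w)
                        \<and> (\<forall>cm \<in> set (cq_cmps Q). cmp_holds \<nu> cm))"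

text \<open>A schema assigns to each relation name its arity.\<close>
type_synonym 'r schema = "'r \<Rightarrow> nat"

definition atoms_over :: "'r schema \<Rightarrow> ('r, 'v, 'c) atom list \<Rightarrow> bool" where
  "atoms_over S as = (\<forall>a \<in> set as. length (snd a) = S (fst a))"

definition cq_over :: "'r schema \<Rightarrow> ('r, 'v, 'c) cq \<Rightarrow> bool" where
  "cq_over S Q = atoms_over S (cq_atoms Q)"

definition denial_over :: "'r schema \<Rightarrow> ('r, 'v, 'c) denial \<Rightarrow> bool" where
  "denial_over S ic = atoms_over S (dc_atoms ic)"

definition pdb_instance :: "'r schema \<Rightarrow> ('r, 'c) fact set \<Rightarrow> (('r, 'c) fact \<Rightarrow> real) \<Rightarrow> bool" where
  "pdb_instance S D p = (finite D \<and> (\<forall>t \<in> D. length (snd t) = S (fst t))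
                         \<and> (\<forall>t \<in> D. 0 \<le> p t \<and> p t \<le> 1))"

definition pwd :: "('r, 'c) fact set \<Rightarrow> ('r, 'c) fact set set" where
  "pwd D = Pow D"

text \<open>Interpretation: probability distribution on pwd(D) (represented as a function that
  vanishes outside pwd(D)) whose marginal at each tuple t is p(t).\<close>
definition pdb_interpretation :: "('r, 'c) fact set \<Rightarrow> (('r, 'c) fact \<Rightarrow> real)
                              \<Rightarrow> (('r, 'c) fact set \<Rightarrow> real) \<Rightarrow> bool" where
  "pdb_interpretation D p M =
     ((\<forall>w \<in> pwd D. 0 \<le> M w) \<and> (\<forall>w. w \<notin> pwd D \<longrightarrow> M w = 0)
      \<and> (\<Sum>w \<in> pwd D. M w) = 1
      \<and> (\<forall>t \<in> D. (\<Sum>w \<in> {w \<in> pwd D. t \<in> w}. M w) = p t))"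

definition is_model :: "('r, 'c::linorder) fact set \<Rightarrow> (('r, 'c) fact \<Rightarrow> real)
                        \<Rightarrow> ('r, 'v, 'c) denial set \<Rightarrow> (('r, 'c) fact set \<Rightarrow> real) \<Rightarrow> bool" where
  "is_model D p IC M = (pdb_interpretation D p M \<and> (\<forall>w \<in> pwd D. \<not> sat_ICs w IC \<longrightarrow> M w = 0))"

definition models :: "('r, 'c::linorder) fact set \<Rightarrow> (('r, 'c) fact \<Rightarrow> real)
                      \<Rightarrow> ('r, 'v, 'c) denial set \<Rightarrow> (('r, 'c) fact set \<Rightarrow> real) set" where
  "models D p IC = {M. is_model D p IC M}"

definition consistent :: "('r, 'c::linorder) fact set \<Rightarrow> (('r, 'c) fact \<Rightarrow> real)
                          \<Rightarrow> ('r, 'v, 'c) denial set \<Rightarrow> bool" where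
  "consistent D p IC = (models D p IC \<noteq> {})"

definition pQ :: "(('r, 'c) fact set \<Rightarrow> real) \<Rightarrow> ('r, 'v, 'c::linorder) cq
                  \<Rightarrow> ('r, 'c) fact set \<Rightarrow> 'c list \<Rightarrow> real" where
  "pQ M Q D t = (\<Sum>w \<in> {w \<in> pwd D. cq_holds w Q t}. M w)"

definition AnsM :: "(('r, 'c) fact set \<Rightarrow> real) \<Rightarrow> ('r, 'v, 'c::linorder) cq
                    \<Rightarrow> ('r, 'c) fact set \<Rightarrow> ('c list \<times> real) set" where
  "AnsM M Q D = {(t, pQ M Q D t) | t. \<exists>w \<in> pwd D. cq_holds w Q t}"

definition Ans :: "('r, 'v, 'c::linorder) cq \<Rightarrow> ('r, 'c) fact set \<Rightarrow> (('r, 'c) fact \<Rightarrow> real)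
                   \<Rightarrow> ('r, 'v, 'c) denial set \<Rightarrow> ('c list \<times> real \<times> real) set" where
  "Ans Q D p IC =
     {(t, Inf {pQ M Q D t | M. M \<in> models D p IC}, Sup {pQ M Q D t | M. M \<in> models D p IC}) | t.
        \<exists>M \<in> models D p IC. \<exists>q. (t, q) \<in> AnsM M Q D}"

end

theory Submission
  imports Defs "HOL-Analysis.Analysis"
begin

lemma cont_sum_coord: "continuous_on UNIV (\<lambda>M::'a \<Rightarrow> real. \<Sum>w\<in>A. M w)"
  by (intro continuous_on_sum) (simp)

lemma models_closed: "closed (models D p IC)"
proof -
  have eq: "models D p IC =
     (\<Inter>w\<in>pwd D. {M. 0 \<le> M w}) \<inter> (\<Inter>w\<in>- pwd D. {M. M w = 0}) \<inter> {M. (\<Sum>w \<in> pwd D. M w) = 1}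
     \<inter> (\<Inter>t\<in>D. {M. (\<Sum>w \<in> {w \<in> pwd D. t \<in> w}. M w) = p t})
     \<inter> (\<Inter>w\<in>{w\<in>pwd D. \<not> sat_ICs w IC}. {M. M w = 0})"
    by (auto simp: models_def is_model_def pdb_interpretation_def)
  have c: "continuous_on UNIV (\<lambda>M::('a,'b) fact set \<Rightarrow> real. M w)" for w
    by simp
  show ?thesis unfolding eq
    by (intro closed_Int closed_INT ballI closed_Collect_eq closed_Collect_le
        c cont_sum_coord continuous_on_const)
qed

lemma models_compact:
  assumes "finite D"
  shows "compact (models D p IC)"
proof -
  define K where "K = PiE UNIV (\<lambda>w. if w \<in> pwd D then {0..1::real} else {0})"
  have "compactin (product_topology (\<lambda>_. euclidean) UNIV) K"
    unfolding K_def compactin_PiE by (auto simp: compactin_euclidean_iff)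
  hence cK: "compact K" by (simp add: euclidean_product_topology compactin_euclidean_iff)
  have sub: "models D p IC \<subseteq> K"
  proof
    fix M assume "M \<in> models D p IC"
    hence I: "pdb_interpretation D p M" by (simp add: models_def is_model_def)
    have fin: "finite (pwd D)" using assms by (simp add: pwd_def)
    have "M w \<le> 1" if "w \<in> pwd D" for w
    proof -
      have "M w \<le> (\<Sum>w \<in> pwd D. M w)"
        using I that fin by (intro member_le_sum) (auto simp: pdb_interpretation_def)
      thus ?thesis using I by (simp add: pdb_interpretation_def)
    qed
    thus "M \<in> K" using I by (auto simp: K_def pdb_interpretation_def)
  qed
  show ?thesis
    using compact_Int_closed[OF cK models_closed[of D p IC]] sub by (simp add: Int_absorb1)
qed

lemma sum_comb: "(\<Sum>w\<in>A. (1-l)*M1 w + l*M2 w::real) = (1-l)*(\<Sum>w\<in>A. M1 w) + l*(\<Sum>w\<in>A. M2 w)"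
  by (simp only: sum.distrib sum_distrib_left)

lemma aux: "0 \<le> (a::real) \<Longrightarrow> 0 \<le> b \<Longrightarrow> 0 \<le> l \<Longrightarrow> l \<le> 1 \<Longrightarrow> l*a \<le> a + l*b"
  by (smt (verit) mult_left_le_one_le mult_nonneg_nonneg)

lemma models_convex:
  assumes "M1 \<in> models D p IC" "M2 \<in> models D p IC" "0 \<le> l" "l \<le> (1::real)"
  shows "(\<lambda>w. (1-l)*M1 w + l*M2 w) \<in> models D p IC"
proof -
  have A: "pdb_interpretation D p M1" "pdb_interpretation D p M2"
    "\<forall>w \<in> pwd D. \<not> sat_ICs w IC \<longrightarrow> M1 w = 0" "\<forall>w \<in> pwd D. \<not> sat_ICs w IC \<longrightarrow> M2 w = 0"
    using assms by (auto simp: models_def is_model_def)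
  have "pdb_interpretation D p (\<lambda>w. (1-l)*M1 w + l*M2 w)"
    using A(1,2) assms(3,4) unfolding pdb_interpretation_def sum_comb
    by (auto intro!: add_nonneg_nonneg mult_nonneg_nonneg simp: algebra_simps
        intro: aux)
  then show ?thesis using A(3,4) by (simp add: models_def is_model_def)
qed

lemma pQ_comb: "pQ (\<lambda>w. (1-l)*M1 w + l*M2 w) Q D t = (1-l)*pQ M1 Q D t + l*pQ M2 Q D t"
  unfolding pQ_def by (rule sum_comb)

theorem proposition2:
  fixes S :: "'r schema"
    and Q :: "('r, 'v, 'c::linorder) cq"
    and D :: "('r, 'c) fact set"
    and p :: "('r, 'c) fact \<Rightarrow> real"
    and IC :: "('r, 'v, 'c) denial set"
  assumes "cq_over S Q"
    and "\<forall>ic \<in> IC. denial_over S ic"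
    and "pdb_instance S D p"
    and "consistent D p IC"
    and "(t, pmin, pmax) \<in> Ans Q D p IC"
    and "pmin \<le> q" and "q \<le> pmax"
  shows "\<exists>M \<in> models D p IC. (t, q) \<in> AnsM M Q D"
proof -
  define f where "f M = pQ M Q D t" for M
  define V where "V = f ` models D p IC"
  have setV: "{pQ M Q D t | M. M \<in> models D p IC} = V"
    by (auto simp: V_def f_def)
  from assms(5) have pm: "pmin = Inf V" "pmax = Sup V" and ex: "\<exists>w\<in>pwd D. cq_holds w Q t"
    by (auto simp: Ans_def setV AnsM_def)
  have fin: "finite D" using assms(3) by (simp add: pdb_instance_def)
  have cf: "continuous_on UNIV f" unfolding f_def pQ_def by (rule cont_sum_coord)
  have cV: "compact V" unfolding V_def
    by (rule compact_continuous_image[OF continuous_on_subset[OF cf] models_compact[OF fin]]) auto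
  have ne: "V \<noteq> {}" using assms(4) by (simp add: V_def consistent_def)
  have "pmin \<in> V" unfolding pm
    by (rule closed_contains_Inf[OF ne bounded_imp_bdd_below[OF compact_imp_bounded[OF cV]] compact_imp_closed[OF cV]])
  then obtain M1 where M1: "M1 \<in> models D p IC" "f M1 = pmin" by (auto simp: V_def)
  have "pmax \<in> V" unfolding pm
    by (rule closed_contains_Sup[OF ne bounded_imp_bdd_above[OF compact_imp_bounded[OF cV]] compact_imp_closed[OF cV]])
  then obtain M2 where M2: "M2 \<in> models D p IC" "f M2 = pmax" by (auto simp: V_def)
  have ans: "(t, f M) \<in> AnsM M Q D" for M using ex by (auto simp: AnsM_def f_def)
  show ?thesis
  proof (cases "pmin = pmax")
    case True
    hence "q = f M1" using assms(6,7) M1 by simp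
    thus ?thesis using M1 ans by blast
  next
    case False
    hence lt: "pmin < pmax" using assms(6,7) by simp
    define l where "l = (q - pmin) / (pmax - pmin)"
    have l0: "0 \<le> l" "l \<le> 1" using lt assms(6,7) by (auto simp: l_def field_simps)
    define M where "M = (\<lambda>w. (1-l)*M1 w + l*M2 w)"
    have "M \<in> models D p IC" unfolding M_def by (rule models_convex[OF M1(1) M2(1) l0])
    moreover have "f M = q"
    proof -
      have "f M = (1-l)*pmin + l*pmax"
        unfolding M_def f_def pQ_comb using M1(2) M2(2) by (simp add: f_def)
      also have "\<dots> = pmin + l*(pmax-pmin)" by (simp add: algebra_simps)
      also have "l*(pmax-pmin) = q - pmin" using lt by (simp add: l_def)
      finally show ?thesis by simp
    qed
    ultimately show ?thesis using ans by metis
  qed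
qed

end
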